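(* Let $n\ge3$, $\kappa=\kappa_{12}\mathbf e_1\wedge\mathbf e_2$, so that the gyroscopic form is $\mathbf f=\frac{\kappa_{12}}{\varepsilon^2}d\gamma_1\wedge d\gamma_2$, and let the modified inertia operator be $\mathbf I(X\wedge Y)=\mathbb AX\wedge\mathbb AY$ with $\mathbb A=\operatorname{diag}(a_1,a_2,a_3,\dots,a_3)$, $a_i>0$. Let $\mathcal A(\gamma)=a_3+(a_1-a_3)\gamma_1^2+(a_2-a_3)\gamma_2^2$. Then $\mathcal N(\gamma)=\varepsilon\mathcal A(\gamma)^{\frac1{2\varepsilon}-1}$ is a Chaplygin multiplier: under the time substitution $d\tau=\mathcal N(\gamma)dt$ and the change of momenta $\tilde p=\mathcal N(\gamma)p$, the reduced system $$\dot\gamma=X_\gamma(\gamma,p),\qquad \dot p=\frac{1-\varepsilon}{\varepsilon^3}\mathbf I(\gamma\wedge X_\gamma)X_\gamma+\frac1{\varepsilon^2}\kappa X_\gamma+\mu\gamma$$ on $T^*S^{n-1}$ becomes the magnetic geodesic flow of the metric $$ds^2_{\mathbb A,\varepsilon}=(\gamma,\mathbb A\gamma)^{\frac1\varepsilon-2}\big((\mathbb Ad\gamma,d\gamma)(\mathbb A\gamma,\gamma)-(\mathbb A\gamma,d\gamma)^2\big)$$ on $S^{n-1}$ (Hamiltonian $h^*(\gamma,\tilde p)=\frac12\mathcal A(\gamma)^{1-\frac1\varepsilon}\langle\tilde p,\mathbb A^{-1}\tilde p\rangle$) with respect to the twisted symplectic form $$\Big(d\tilde p_1\wedge d\gamma_1+\dots+d\tilde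 p_n\wedge d\gamma_n+\frac{\kappa_{12}}{\varepsilon}\mathcal A(\gamma)^{\frac1{2\varepsilon}-1}d\gamma_1\wedge d\gamma_2\Big)\Big|_{T^*S^{n-1}}.$$
   Context: Model: balanced $n$-dimensional ball with gyroscope rolling without slipping and twisting over a fixed sphere; $\varepsilon=b/(b+a)$ or $b/(b-a)$ with $a,b>0$ the radii of the ball and the sphere. On $so(n)$, $\langle X,Y\rangle=-\frac12\operatorname{tr}(XY)$; on $\mathbb R^n$ the Euclidean product (also written $(\cdot,\cdot)$); $x\wedge y=xy^T-yx^T$; $\mathbf e_1,\dots,\mathbf e_n$ is the standard basis. $\mathbf I=\mathbb I+ma^2\mathrm{Id}$ is the modified inertia operator. $T^*S^{n-1}=\{(\gamma,p)\in\mathbb R^{2n}:\langle\gamma,\gamma\rangle=1,\langle\gamma,p\rangle=0\}$; $X_\gamma(\gamma,p)$ is the inverse of the Legendre map $\dot\gamma\mapsto p=-\frac1{\varepsilon^2}\mathbf I(\gamma\wedge\dot\gamma)\gamma$ on $TS^{n-1}$, $h=\frac12\langle X_\gamma,p\rangle$, and $\mu=\frac{\varepsilon-1}{\varepsilon^3}\langle\mathbf I(\gamma\wedge X_\gamma)X_\gamma,\gamma\rangle-2h+\frac1{\varepsilon^2}\langle X_\gamma,\kappa\gamma\rangle$. (Note $\mathcal A(\gamma)=\langle\mathbb A\gamma,\gamma\rangle$ on the unit sphere.) *)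

theory Defs
  imports "HOL-Analysis.Analysis"
begin

text \<open>Vectors of R^n are elements of real^'n (n = CARD('n)); the two distinguished
  basis directions e1, e2 are the coordinates i1, i2 (distinct).\<close>

definition wedge :: "real^'n \<Rightarrow> real^'n \<Rightarrow> real^'n^'n" where
  "wedge x y = (\<chi> i j. x$i * y$j - y$i * x$j)"

definition diagA :: "real \<Rightarrow> real \<Rightarrow> real \<Rightarrow> 'n \<Rightarrow> 'n \<Rightarrow> real^'n^'n" where
  "diagA a1 a2 a3 i1 i2 =
     (\<chi> i j. if i = j then (if i = i1 then a1 else if i = i2 then a2 else a3) else 0)"

definition calA :: "real \<Rightarrow> real \<Rightarrow> real \<Rightarrow> 'n \<Rightarrow> 'n \<Rightarrow> real^'n \<Rightarrow> real" where
  "calA a1 a2 a3 i1 i2 g = a3 + (a1 - a3) * (g$i1)^2 + (a2 - a3) * (g$i2)^2"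

definition kappa :: "real \<Rightarrow> 'n \<Rightarrow> 'n \<Rightarrow> real^'n^'n" where
  "kappa k12 i1 i2 = k12 *\<^sub>R wedge (axis i1 1) (axis i2 1)"

definition TstarS :: "((real^'n) \<times> (real^'n)) set" where
  "TstarS = {(g, p). g \<bullet> g = 1 \<and> g \<bullet> p = 0}"

definition tangent_TstarS :: "real^'n \<Rightarrow> real^'n \<Rightarrow> ((real^'n) \<times> (real^'n)) set" where
  "tangent_TstarS g p = {(dg, dp). g \<bullet> dg = 0 \<and> dg \<bullet> p + g \<bullet> dp = 0}"

definition legendre :: "real \<Rightarrow> (real^'n^'n \<Rightarrow> real^'n^'n) \<Rightarrow> real^'n \<Rightarrow> real^'n \<Rightarrow> real^'n" where
  "legendre eps I g v = - (1 / eps^2) *\<^sub>R (I (wedge g v) *v g)"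

definition Xg :: "real \<Rightarrow> (real^'n^'n \<Rightarrow> real^'n^'n) \<Rightarrow> real^'n \<Rightarrow> real^'n \<Rightarrow> real^'n" where
  "Xg eps I g p = (THE v. g \<bullet> v = 0 \<and> legendre eps I g v = p)"

definition hred :: "real \<Rightarrow> (real^'n^'n \<Rightarrow> real^'n^'n) \<Rightarrow> real^'n \<Rightarrow> real^'n \<Rightarrow> real" where
  "hred eps I g p = (1/2) * (Xg eps I g p \<bullet> p)"

definition mu :: "real \<Rightarrow> (real^'n^'n \<Rightarrow> real^'n^'n) \<Rightarrow> real^'n^'n \<Rightarrow> real^'n \<Rightarrow> real^'n \<Rightarrow> real" where
  "mu eps I K g p =
     (let X = Xg eps I g p in
        (eps - 1) / eps^3 * ((I (wedge g X) *v X) \<bullet> g) - 2 * hred eps I g p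
        + 1 / eps^2 * (X \<bullet> (K *v g)))"

definition pdot_red :: "real \<Rightarrow> (real^'n^'n \<Rightarrow> real^'n^'n) \<Rightarrow> real^'n^'n \<Rightarrow> real^'n \<Rightarrow> real^'n \<Rightarrow> real^'n" where
  "pdot_red eps I K g p =
     (let X = Xg eps I g p in
        ((1 - eps) / eps^3) *\<^sub>R (I (wedge g X) *v X) + (1 / eps^2) *\<^sub>R (K *v X)
        + mu eps I K g p *\<^sub>R g)"

definition Nmult :: "real \<Rightarrow> real \<Rightarrow> real \<Rightarrow> real \<Rightarrow> 'n \<Rightarrow> 'n \<Rightarrow> real^'n \<Rightarrow> real" where
  "Nmult eps a1 a2 a3 i1 i2 g = eps * (calA a1 a2 a3 i1 i2 g) powr (1 / (2 * eps) - 1)"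

definition hstar :: "real \<Rightarrow> real \<Rightarrow> real \<Rightarrow> real \<Rightarrow> 'n \<Rightarrow> 'n \<Rightarrow> real^'n \<Rightarrow> real^'n \<Rightarrow> real" where
  "hstar eps a1 a2 a3 i1 i2 g q =
     (1/2) * (calA a1 a2 a3 i1 i2 g) powr (1 - 1 / eps)
       * (q \<bullet> (matrix_inv (diagA a1 a2 a3 i1 i2) *v q))"

definition twisted_form :: "real \<Rightarrow> real \<Rightarrow> real \<Rightarrow> real \<Rightarrow> real \<Rightarrow> 'n \<Rightarrow> 'n \<Rightarrow> real^'n
      \<Rightarrow> ((real^'n) \<times> (real^'n)) \<Rightarrow> ((real^'n) \<times> (real^'n)) \<Rightarrow> real" where
  "twisted_form eps k12 a1 a2 a3 i1 i2 g Z W =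
     (snd Z \<bullet> fst W - snd W \<bullet> fst Z)
     + k12 / eps * (calA a1 a2 a3 i1 i2 g) powr (1 / (2 * eps) - 1)
         * ((fst Z)$i1 * (fst W)$i2 - (fst W)$i1 * (fst Z)$i2)"

definition metric :: "real \<Rightarrow> real^'n^'n \<Rightarrow> real^'n \<Rightarrow> real^'n \<Rightarrow> real^'n \<Rightarrow> real" where
  "metric eps A g v w =
     (g \<bullet> (A *v g)) powr (1 / eps - 2)
       * (((A *v v) \<bullet> w) * ((A *v g) \<bullet> g) - ((A *v g) \<bullet> v) * ((A *v g) \<bullet> w))"

end

theory Submission imports Defs begin

lemma wedge_mv: "wedge x y *v z = (y \<bullet> z) *\<^sub>R x - (x \<bullet> z) *\<^sub>R y"
  by (simp add: vec_eq_iff matrix_vector_mult_def wedge_def inner_vec_def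
      algebra_simps sum_subtractf sum_distrib_left)

lemma legendre_eq:
  assumes inertia: "\<forall>x y. I (wedge x y) = wedge (D *v x) (D *v y)"
  shows "legendre eps I g v = (1/eps^2) *\<^sub>R ((g \<bullet> (D *v g)) *\<^sub>R (D *v v) - ((D *v v) \<bullet> g) *\<^sub>R (D *v g))"
  by (simp add: legendre_def inertia wedge_mv inner_commute algebra_simps)

lemma Xg_formula:
  fixes D M :: "real^'n^'n"
  assumes inertia: "\<forall>x y. I (wedge x y) = wedge (D *v x) (D *v y)"
    and sD: "\<And>x y. (D *v x) \<bullet> y = x \<bullet> (D *v y)"
    and MD: "\<And>x. M *v (D *v x) = x" and DM: "\<And>x. D *v (M *v x) = x"
    and e: "eps \<noteq> 0" and gg: "g \<bullet> g = 1" and gp: "g \<bullet> p = 0"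
    and apos: "g \<bullet> (D *v g) > 0"
  shows "Xg eps I g p = (eps^2 / (g \<bullet> (D *v g))) *\<^sub>R (M *v p - (g \<bullet> (M *v p)) *\<^sub>R g)"
proof -
  define a where "a = g \<bullet> (D *v g)"
  define \<beta> where "\<beta> = g \<bullet> (M *v p)"
  define v0 where "v0 = (eps^2 / a) *\<^sub>R (M *v p - \<beta> *\<^sub>R g)"
  have a0: "a \<noteq> 0" using apos a_def by simp
  have L: "\<And>v. legendre eps I g v = (1/eps^2) *\<^sub>R (a *\<^sub>R (D *v v) - ((D *v v) \<bullet> g) *\<^sub>R (D *v g))"
    using legendre_eq[OF inertia] a_def by simp
  have Dv0: "D *v v0 = (eps^2 / a) *\<^sub>R (p - \<beta> *\<^sub>R (D *v g))"
    by (simp add: v0_def DM algebra_simps)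
  have Dv0g: "(D *v v0) \<bullet> g = -(eps^2 * \<beta>)"
  proof -
    have "(D *v v0) \<bullet> g = g \<bullet> (D *v v0)" by (simp add: inner_commute)
    also have "\<dots> = (eps^2 / a) * (g \<bullet> p) - (eps^2 / a) * \<beta> * a"
      using a0 by (simp add: Dv0 inner_diff_right a_def field_simps)
    finally show ?thesis using a0 gp by simp
  qed
  have ex1: "g \<bullet> v0 = 0"
    using a0 by (simp add: v0_def inner_diff_right gg \<beta>_def)
  have ex2: "legendre eps I g v0 = p"
  proof -
    have Dgg: "(D *v g) \<bullet> g = a" by (simp add: a_def inner_commute)
    have pg: "p \<bullet> g = 0" using gp by (simp add: inner_commute)
    show ?thesis using a0 e by (simp add: L Dv0g) (simp add: Dv0 algebra_simps Dgg pg)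
  qed
  show ?thesis
    unfolding Xg_def a_def[symmetric] \<beta>_def[symmetric] v0_def[symmetric]
  proof (rule the_equality)
    show "g \<bullet> v0 = 0 \<and> legendre eps I g v0 = p" using ex1 ex2 by simp
  next
    fix v assume h: "g \<bullet> v = 0 \<and> legendre eps I g v = p"
    define s where "s = (D *v v) \<bullet> g"
    have Mp: "M *v p = (1/eps^2) *\<^sub>R (a *\<^sub>R v - s *\<^sub>R g)"
    proof -
      have "M *v p = M *v legendre eps I g v" using h by simp
      also have "\<dots> = (1/eps^2) *\<^sub>R (a *\<^sub>R v - s *\<^sub>R g)"
        unfolding L s_def[symmetric] by (simp add: algebra_simps MD)
      finally show ?thesis .
    qed
    have b: "\<beta> = - s / eps^2"
      using h by (simp add: \<beta>_def Mp inner_diff_right gg)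
    show "v = v0"
      using a0 e by (simp add: v0_def Mp b algebra_simps)
  qed
qed


definition dd :: "real \<Rightarrow> real \<Rightarrow> real \<Rightarrow> 'n \<Rightarrow> 'n \<Rightarrow> 'n \<Rightarrow> real" where
  "dd a1 a2 a3 i1 i2 i = (if i = i1 then a1 else if i = i2 then a2 else a3)"

lemma sum_delta_mult: fixes i :: "'n::finite" shows "(\<Sum>j\<in>UNIV. (if i = j then c j else 0) * f j) = (c i * f i :: real)"
proof -
  have "(\<Sum>j\<in>UNIV. (if i = j then c j else 0) * f j) = (\<Sum>j\<in>UNIV. if i = j then c j * f j else 0)"
    by (rule sum.cong) auto
  also have "\<dots> = c i * f i" by simp
  finally show ?thesis .
qed

lemma diagA_mv: "diagA a1 a2 a3 i1 i2 *v x = (\<chi> i. dd a1 a2 a3 i1 i2 i * x$i)"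
  by (simp add: vec_eq_iff matrix_vector_mult_def diagA_def dd_def sum_delta_mult)

definition dinv :: "real \<Rightarrow> real \<Rightarrow> real \<Rightarrow> 'n \<Rightarrow> 'n \<Rightarrow> real^'n^'n" where
  "dinv a1 a2 a3 i1 i2 = (\<chi> i j. if i = j then 1 / dd a1 a2 a3 i1 i2 i else 0)"

lemma dinv_mv: "dinv a1 a2 a3 i1 i2 *v x = (\<chi> i. x$i / dd a1 a2 a3 i1 i2 i)"
  by (simp add: vec_eq_iff matrix_vector_mult_def dinv_def sum_delta_mult)

lemma dd_nz: "a1 > 0 \<Longrightarrow> a2 > 0 \<Longrightarrow> a3 > 0 \<Longrightarrow> dd a1 a2 a3 i1 i2 i \<noteq> 0"
  by (simp add: dd_def)

lemma matrix_inv_diagA: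
  assumes "a1 > 0" "a2 > 0" "a3 > 0"
  shows "matrix_inv (diagA a1 a2 a3 i1 i2) = dinv a1 a2 a3 i1 i2"
proof -
  let ?D = "diagA a1 a2 a3 i1 i2" and ?E = "dinv a1 a2 a3 i1 i2"
  have pos: "\<And>i. dd a1 a2 a3 i1 i2 i \<noteq> 0" using assms by (simp add: dd_def)
  have 1: "?D ** ?E = mat 1"
    by (rule matrix_eq[THEN iffD2]) (simp add: matrix_vector_mul_assoc[symmetric] diagA_mv dinv_mv vec_eq_iff pos)
  have 2: "?E ** ?D = mat 1"
    by (rule matrix_eq[THEN iffD2]) (simp add: matrix_vector_mul_assoc[symmetric] diagA_mv dinv_mv vec_eq_iff pos)
  let ?M = "matrix_inv ?D"
  have MM: "?D ** ?M = mat 1 \<and> ?M ** ?D = mat 1"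
    unfolding matrix_inv_def by (rule someI[of _ ?E]) (use 1 2 in auto)
  then have "?M = ?M ** (?D ** ?E)" using 1 by (simp add: matrix_mul_rid)
  also have "\<dots> = (?M ** ?D) ** ?E" by (simp add: matrix_mul_assoc)
  also have "\<dots> = ?E" using MM by (simp add: matrix_mul_lid)
  finally show ?thesis .
qed

lemma diagA_sym: "(diagA a1 a2 a3 i1 i2 *v x) \<bullet> y = x \<bullet> (diagA a1 a2 a3 i1 i2 *v y)"
  by (simp add: diagA_mv inner_vec_def mult_ac)

lemma dinv_diagA: "a1 > 0 \<Longrightarrow> a2 > 0 \<Longrightarrow> a3 > 0 \<Longrightarrow> dinv a1 a2 a3 i1 i2 *v (diagA a1 a2 a3 i1 i2 *v x) = x"
  by (simp add: diagA_mv dinv_mv vec_eq_iff dd_nz)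

lemma diagA_dinv: "a1 > 0 \<Longrightarrow> a2 > 0 \<Longrightarrow> a3 > 0 \<Longrightarrow> diagA a1 a2 a3 i1 i2 *v (dinv a1 a2 a3 i1 i2 *v x) = x"
  by (simp add: diagA_mv dinv_mv vec_eq_iff dd_nz)

lemma diagA_inner:
  assumes "i1 \<noteq> i2"
  shows "(diagA a1 a2 a3 i1 i2 *v x) \<bullet> y
     = a3 * (x \<bullet> y) + (a1 - a3) * (x$i1 * y$i1) + (a2 - a3) * (x$i2 * y$i2)"
proof -
  have dd: "\<And>i. dd a1 a2 a3 i1 i2 i = a3 + (if i = i1 then a1 - a3 else 0) + (if i2 = i then a2 - a3 else 0)"
    using assms by (auto simp: dd_def)
  have "(diagA a1 a2 a3 i1 i2 *v x) \<bullet> y = (\<Sum>i\<in>UNIV. dd a1 a2 a3 i1 i2 i * x$i * y$i)"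
    by (simp add: diagA_mv inner_vec_def)
  also have "\<dots> = (\<Sum>i\<in>UNIV. a3 * (x$i * y$i) + (if i = i1 then (a1 - a3) * (x$i * y$i) else 0)
        + (if i2 = i then (a2 - a3) * (x$i * y$i) else 0))"
    by (rule sum.cong) (auto simp: dd algebra_simps)
  also have "\<dots> = a3 * (x \<bullet> y) + (a1 - a3) * (x$i1 * y$i1) + (a2 - a3) * (x$i2 * y$i2)"
    by (simp add: sum.distrib inner_vec_def sum_distrib_left)
  finally show ?thesis .
qed

lemma calA_eq:
  assumes "i1 \<noteq> i2" "g \<bullet> g = 1"
  shows "calA a1 a2 a3 i1 i2 g = g \<bullet> (diagA a1 a2 a3 i1 i2 *v g)"
  using diagA_inner[OF assms(1), of a1 a2 a3 g g] assms(2)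
  by (simp add: calA_def inner_commute power2_eq_square)

lemma calA_pos:
  assumes "i1 \<noteq> i2" "g \<bullet> g = 1" "a1 > 0" "a2 > 0" "a3 > 0"
  shows "calA a1 a2 a3 i1 i2 g > 0"
proof -
  have "g \<bullet> (diagA a1 a2 a3 i1 i2 *v g) = (\<Sum>i\<in>UNIV. dd a1 a2 a3 i1 i2 i * (g$i)^2)"
    by (simp add: diagA_mv inner_vec_def power2_eq_square mult_ac)
  also have "\<dots> \<ge> (\<Sum>i\<in>UNIV. min a1 (min a2 a3) * (g$i)^2)"
    by (rule sum_mono) (auto simp: dd_def intro!: mult_right_mono)
  also have "(\<Sum>i\<in>UNIV. min a1 (min a2 a3) * (g$i)^2) = min a1 (min a2 a3)"
    using assms(2) by (simp add: sum_distrib_left[symmetric] inner_vec_def power2_eq_square)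
  finally show ?thesis using calA_eq[OF assms(1,2)] assms(3-5) by simp
qed


lemma local_inverse:
  fixes \<tau> :: "real \<Rightarrow> real" and J :: "real set"
  assumes J: "open J" "is_interval J" and t: "t \<in> J"
    and der: "\<And>s. s \<in> J \<Longrightarrow> (\<tau> has_real_derivative d s) (at s)"
    and sgn: "(\<forall>s\<in>J. d s > 0) \<or> (\<forall>s\<in>J. d s < 0)"
  shows "\<exists>U \<sigma>. open U \<and> \<tau> t \<in> U \<and> (\<forall>y\<in>U. \<sigma> y \<in> J \<and> \<tau> (\<sigma> y) = y) \<and> \<sigma> (\<tau> t) = t
           \<and> (\<sigma> has_real_derivative inverse (d t)) (at (\<tau> t))"
proof -
  obtain \<delta> where \<delta>: "\<delta> > 0" "cball t \<delta> \<subseteq> J" using J(1) t open_contains_cball by blast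
  define S where "S = {t - \<delta> .. t + \<delta>}"
  have SJ: "S \<subseteq> J"
  proof
    fix x assume "x \<in> S"
    then have "x \<in> cball t \<delta>" by (auto simp: S_def cball_def dist_real_def abs_le_iff)
    then show "x \<in> J" using \<delta>(2) by blast
  qed
  have tS: "t \<in> S" using \<delta> by (auto simp: S_def)
  have cont: "\<And>x. x \<in> J \<Longrightarrow> isCont \<tau> x" using der DERIV_isCont by blast
  have mono: "\<And>x y. x \<in> J \<Longrightarrow> y \<in> J \<Longrightarrow> x < y \<Longrightarrow> (\<tau> x < \<tau> y \<and> (\<forall>s\<in>J. d s > 0)) \<or> (\<tau> x > \<tau> y \<and> (\<forall>s\<in>J. d s < 0))"
  proof -
    fix x y assume xy: "x \<in> J" "y \<in> J" "x < y"
    have sub: "\<And>z. x \<le> z \<Longrightarrow> z \<le> y \<Longrightarrow> z \<in> J" using J(2) xy unfolding is_interval_1 by blast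
    show "?thesis x y"
    proof (cases "\<forall>s\<in>J. d s > 0")
      case True
      have "\<tau> x < \<tau> y"
        by (rule DERIV_pos_imp_increasing[OF xy(3)]) (use sub der True in blast)
      then show ?thesis using True by blast
    next
      case False
      then have F: "\<forall>s\<in>J. d s < 0" using sgn by blast
      have "\<tau> x > \<tau> y"
        by (rule DERIV_neg_imp_decreasing[OF xy(3)]) (use sub der F in blast)
      then show ?thesis using F by blast
    qed
  qed
  have inj: "inj_on \<tau> S"
  proof (rule inj_onI)
    fix x y assume "x \<in> S" "y \<in> S" "\<tau> x = \<tau> y"
    then show "x = y" using mono[of x y] mono[of y x] SJ by (metis linorder_neq_iff subsetD less_irrefl)
  qed
  define \<sigma> where "\<sigma> = inv_into S \<tau>"
  have cS: "continuous_on S \<tau>" using cont SJ by (meson continuous_at_imp_continuous_on subsetD)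
  have cinv: "continuous_on (\<tau> ` S) \<sigma>"
    unfolding \<sigma>_def
  proof (rule continuous_on_inv[OF cS])
    show "compact S" by (simp add: S_def)
    show "\<forall>x\<in>S. inv_into S \<tau> (\<tau> x) = x" using inj by (simp add: inv_into_f_f)
  qed
  have ivt: "\<exists>lo hi. lo < \<tau> t \<and> \<tau> t < hi \<and> {lo<..<hi} \<subseteq> \<tau> ` S"
  proof -
    have l: "t - \<delta> \<in> J" "t + \<delta> \<in> J" "t - \<delta> < t" "t < t + \<delta>" using SJ \<delta>(1) by (auto simp: S_def)
    have cc: "\<forall>x. t - \<delta> \<le> x \<and> x \<le> t + \<delta> \<longrightarrow> isCont \<tau> x" using cont SJ by (auto simp: S_def)
    show ?thesis
    proof (cases "\<forall>s\<in>J. d s > 0")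
      case True
      then have m1: "\<tau> (t - \<delta>) < \<tau> t" "\<tau> t < \<tau> (t + \<delta>)" using mono[OF l(1) t l(3)] mono[OF t l(2) l(4)] sgn
        by (metis less_asym t)+
      have "{\<tau> (t - \<delta>)<..<\<tau> (t + \<delta>)} \<subseteq> \<tau> ` S"
      proof
        fix y assume "y \<in> {\<tau> (t - \<delta>)<..<\<tau> (t + \<delta>)}"
        then obtain x where "t - \<delta> \<le> x" "x \<le> t + \<delta>" "\<tau> x = y"
          using IVT[of \<tau> "t - \<delta>" y "t + \<delta>"] cc \<delta>(1) by force
        then show "y \<in> \<tau> ` S" by (auto simp: S_def)
      qed
      then show ?thesis using m1 by blast
    next
      case False
      then have F: "\<forall>s\<in>J. d s < 0" using sgn by blast
      then have m1: "\<tau> (t - \<delta>) > \<tau> t" "\<tau> t > \<tau> (t + \<delta>)" using mono[OF l(1) t l(3)] mono[OF t l(2) l(4)]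
        by (metis less_asym t l)+
      have "{\<tau> (t + \<delta>)<..<\<tau> (t - \<delta>)} \<subseteq> \<tau> ` S"
      proof
        fix y assume "y \<in> {\<tau> (t + \<delta>)<..<\<tau> (t - \<delta>)}"
        then obtain x where "t - \<delta> \<le> x" "x \<le> t + \<delta>" "\<tau> x = y"
          using IVT2[of \<tau> "t + \<delta>" y "t - \<delta>"] cc \<delta>(1) by force
        then show "y \<in> \<tau> ` S" by (auto simp: S_def)
      qed
      then show ?thesis using m1 by blast
    qed
  qed
  then obtain lo hi where lh: "lo < \<tau> t" "\<tau> t < hi" "{lo<..<hi} \<subseteq> \<tau> ` S" by blast
  have st: "\<sigma> (\<tau> t) = t" unfolding \<sigma>_def using inj tS by (simp add: inv_into_f_f)
  have inU: "\<And>y. y \<in> {lo<..<hi} \<Longrightarrow> \<sigma> y \<in> J \<and> \<tau> (\<sigma> y) = y"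
  proof -
    fix y assume "y \<in> {lo<..<hi}"
    then have "y \<in> \<tau> ` S" using lh(3) by blast
    then show "\<sigma> y \<in> J \<and> \<tau> (\<sigma> y) = y" unfolding \<sigma>_def using SJ
      by (meson f_inv_into_f inv_into_into subsetD)
  qed
  have "\<tau> t \<in> interior (\<tau> ` S)"
    using lh by (meson greaterThanLessThan_iff interior_maximal open_greaterThanLessThan interior_subset subsetD)
  then have ic: "isCont \<sigma> (\<tau> t)" using continuous_on_interior[OF cinv] by blast
  have d0: "d t \<noteq> 0" using sgn t by force
  have "(\<sigma> has_real_derivative inverse (d t)) (at (\<tau> t))"
    by (rule DERIV_inverse_function[where a=lo and b=hi]) (use der[OF t] st d0 lh inU ic in auto)
  then show ?thesis using inU st lh by (intro exI[of _ "{lo<..<hi}"] exI[of _ \<sigma>]) auto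
qed


lemma second_part:
  assumes i12: "i1 \<noteq> i2" and apos: "a1 > 0" "a2 > 0" "a3 > 0"
    and gg: "g \<bullet> g = 1" and gv: "g \<bullet> v = 0" and qg: "q \<bullet> g = 0"
    and hq: "\<forall>w. w \<bullet> g = 0 \<longrightarrow> q \<bullet> w = metric eps (diagA a1 a2 a3 i1 i2) g v w"
  shows "hstar eps a1 a2 a3 i1 i2 g q = metric eps (diagA a1 a2 a3 i1 i2) g v v / 2"
proof -
  let ?D = "diagA a1 a2 a3 i1 i2" and ?M = "dinv a1 a2 a3 i1 i2"
  define a where "a = g \<bullet> (?D *v g)"
  have aA: "calA a1 a2 a3 i1 i2 g = a" using calA_eq[OF i12 gg] a_def by simp
  have a0: "a > 0" using calA_pos[OF i12 gg apos] aA by simp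
  define c where "c = a powr (1/eps - 2)"
  define s where "s = (?D *v g) \<bullet> v"
  define m where "m = c *\<^sub>R (a *\<^sub>R (?D *v v) - s *\<^sub>R (?D *v g))"
  have Dgg: "(?D *v g) \<bullet> g = a" by (simp add: a_def inner_commute)
  have Dvg: "(?D *v v) \<bullet> g = s" unfolding s_def by (metis diagA_sym inner_commute)
  have met: "\<And>w. metric eps ?D g v w = m \<bullet> w"
    by (simp add: metric_def m_def c_def a_def[symmetric] s_def[symmetric] Dgg inner_diff_left algebra_simps)
  have mg: "m \<bullet> g = 0" by (simp add: m_def inner_diff_left Dgg Dvg)
  have qm: "q = m"
  proof -
    have "(q - m) \<bullet> g = 0" using qg mg by (simp add: inner_diff_left)
    then have "q \<bullet> (q - m) = m \<bullet> (q - m)" using hq met by simp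
    then have "(q - m) \<bullet> (q - m) = 0" by (simp add: inner_diff_left)
    then show ?thesis by simp
  qed
  have Mm: "?M *v m = c *\<^sub>R (a *\<^sub>R v - s *\<^sub>R g)"
    using apos by (simp add: m_def algebra_simps dinv_diagA)
  have Dvv: "metric eps ?D g v v = c * (a * ((?D *v v) \<bullet> v) - s^2)"
    by (simp add: met m_def inner_diff_left power2_eq_square algebra_simps s_def)
  have qMq: "q \<bullet> (?M *v q) = c^2 * a * (a * ((?D *v v) \<bullet> v) - s^2)"
    unfolding qm Mm by (simp add: m_def inner_diff_left inner_diff_right Dgg Dvg gv power2_eq_square algebra_simps)
      (simp add: diagA_sym s_def algebra_simps)
  have pw: "a powr (1 - 1/eps) * c * a = 1"
  proof -
    have "a powr (1 - 1/eps) * c * a = a powr ((1 - 1/eps) + (1/eps - 2)) * a"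
      by (simp only: c_def powr_add)
    also have "\<dots> = a powr (-1) * a" by simp
    also have "\<dots> = 1" using a0 by (simp add: powr_minus)
    finally show ?thesis .
  qed
  have "hstar eps a1 a2 a3 i1 i2 g q = 1/2 * (a powr (1 - 1/eps) * c * a) * (c * (a * ((?D *v v) \<bullet> v) - s^2))"
    by (simp add: hstar_def matrix_inv_diagA[OF apos] aA qMq power2_eq_square mult_ac)
  also have "\<dots> = metric eps ?D g v v / 2" using pw Dvv by simp
  finally show ?thesis .
qed





lemma final_alg:
  fixes e a u \<beta> \<sigma> w \<pi> \<rho> k12 X1 X2 W11 W12 :: real
  assumes e: "e \<noteq> 0" and a: "a > 0" and u: "u > 0"
  shows "1/2 * ((1 - 1/e) * (1/u^2) * (2*w) * ((e*u/a)^2 * \<sigma>) + (a/u^2) * (2 * ((e*u/a) * \<rho>))) =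
   - ( (1/(e*u/a)) * ((e*u/a) * ((1-e)/e^3 * (w * ((e^2/a)*(e^2*\<sigma>/a + e^2*\<beta>^2)) - ((e^2/a)*(\<pi> - \<beta>*w)) * (-(e^2*\<beta>)))
          + 1/e^2 * (k12 * (X2*W11 - X1*W12))) + (e*((1/(2*e)-1)*(u/a^2)*(2*(-(e^2*\<beta>)))))*\<pi>)
       - (1/(e*u/a)) * ((e^2/a)*(\<rho> + \<beta>*((e*u/a)*\<pi>)))
       + k12/e*(u/a)*((X1/(e*u/a))*W12 - W11*(X2/(e*u/a))) )"
  using e a u by (simp add: field_simps power2_eq_square) (simp add: algebra_simps power3_eq_cube power2_eq_square)


lemma dinv_sym: "(dinv a1 a2 a3 i1 i2 *v x) \<bullet> y = x \<bullet> (dinv a1 a2 a3 i1 i2 *v y)"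
  by (simp add: dinv_mv inner_vec_def mult_ac)

lemma key:
  fixes g p0 W1 W2 :: "real^'n" and i1 i2 :: 'n
  assumes i12: "i1 \<noteq> i2" and apos: "a1 > 0" "a2 > 0" "a3 > 0" and e: "eps \<noteq> 0"
    and inertia: "\<forall>x y. I (wedge x y)
                    = wedge (diagA a1 a2 a3 i1 i2 *v x) (diagA a1 a2 a3 i1 i2 *v y)"
    and gg: "g \<bullet> g = 1" and gp: "g \<bullet> p0 = 0"
    and W1g: "g \<bullet> W1 = 0"
    and N_def: "N = Nmult eps a1 a2 a3 i1 i2 g"
    and W2c: "W1 \<bullet> (N *\<^sub>R p0) + g \<bullet> W2 = 0"
    and X_def: "X = Xg eps I g p0"
    and Nd_def: "Nd = eps * ((1 / (2 * eps) - 1) * calA a1 a2 a3 i1 i2 g powr (1 / (2 * eps) - 1 - 1)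
                   * (2*(a1-a3)*g$i1*X$i1 + 2*(a2-a3)*g$i2*X$i2))"
    and pd_def: "pd = pdot_red eps I (kappa k12 i1 i2) g p0"
  shows "((\<lambda>r. hstar eps a1 a2 a3 i1 i2 (g + r *\<^sub>R W1) (N *\<^sub>R p0 + r *\<^sub>R W2)) has_real_derivative
     - twisted_form eps k12 a1 a2 a3 i1 i2 g (inverse N *\<^sub>R X, inverse N *\<^sub>R (N *\<^sub>R pd + Nd *\<^sub>R p0)) (W1, W2)) (at 0)"
proof -
  let ?D = "diagA a1 a2 a3 i1 i2" and ?M = "dinv a1 a2 a3 i1 i2"
  have sD: "\<And>x y. (?D *v x) \<bullet> y = x \<bullet> (?D *v y)" by (rule diagA_sym)
  have MD: "\<And>x. ?M *v (?D *v x) = x" using apos by (simp add: dinv_diagA)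
  have DM: "\<And>x. ?D *v (?M *v x) = x" using apos by (simp add: diagA_dinv)
  define a where "a = calA a1 a2 a3 i1 i2 g"
  have a_eq: "a = g \<bullet> (?D *v g)" using calA_eq[OF i12 gg] a_def by simp
  have a0: "a > 0" using calA_pos[OF i12 gg apos] a_def by simp
  define \<beta> where "\<beta> = g \<bullet> (?M *v p0)"
  define \<sigma> where "\<sigma> = p0 \<bullet> (?M *v p0)"
  define w where "w = (?D *v g) \<bullet> W1"
  define \<pi> where "\<pi> = p0 \<bullet> W1"
  define \<rho> where "\<rho> = W2 \<bullet> (?M *v p0)"
  have Xf: "X = (eps^2 / a) *\<^sub>R (?M *v p0 - \<beta> *\<^sub>R g)"
    unfolding X_def \<beta>_def a_eq using a0 a_eq
    by (intro Xg_formula[OF inertia sD MD DM e gg gp]) simp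
  have Dgg: "(?D *v g) \<bullet> g = a" by (simp add: a_eq inner_commute)
  have pg: "p0 \<bullet> g = 0" using gp by (simp add: inner_commute)
  have gX: "g \<bullet> X = 0" by (simp add: Xf inner_diff_right gg \<beta>_def)
  have DX: "?D *v X = (eps^2 / a) *\<^sub>R (p0 - \<beta> *\<^sub>R (?D *v g))"
    by (simp add: Xf DM algebra_simps)
  have DgX: "(?D *v g) \<bullet> X = -(eps^2 * \<beta>)"
  proof -
    have "(?D *v g) \<bullet> X = g \<bullet> (?D *v X)" by (rule sD)
    also have "\<dots> = (eps^2 / a) * (g \<bullet> p0) - (eps^2 / a) * \<beta> * a"
      using a0 by (simp add: DX inner_diff_right a_eq field_simps)
    finally show ?thesis using a0 gp by simp
  qed
  have pX: "p0 \<bullet> X = eps^2 * \<sigma> / a"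
    by (simp add: Xf inner_diff_right \<sigma>_def gp pg)
  have DXX: "(?D *v X) \<bullet> X = (eps^2 / a) * (eps^2 * \<sigma> / a + eps^2 * \<beta>^2)"
    by (simp add: DX inner_diff_left pX DgX power2_eq_square algebra_simps)
  have DXW: "(?D *v X) \<bullet> W1 = (eps^2 / a) * (\<pi> - \<beta> * w)"
    by (simp add: DX inner_diff_left \<pi>_def w_def algebra_simps)
  have W2g: "W2 \<bullet> g = -(N * \<pi>)"
    using W2c by (simp add: \<pi>_def inner_commute)
  have W2X: "W2 \<bullet> X = (eps^2 / a) * (\<rho> + \<beta> * (N * \<pi>))"
    by (simp add: Xf inner_diff_right \<rho>_def W2g algebra_simps)
  have NdX: "2*(a1-a3)*g$i1*X$i1 + 2*(a2-a3)*g$i2*X$i2 = 2 * (-(eps^2 * \<beta>))"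
    using diagA_inner[OF i12, of a1 a2 a3 g X] DgX gX by (simp add: algebra_simps)
  have dW: "2*(a1-a3)*g$i1*W1$i1 + 2*(a2-a3)*g$i2*W1$i2 = 2 * w"
    using diagA_inner[OF i12, of a1 a2 a3 g W1] W1g by (simp add: w_def algebra_simps)
  have W1g': "W1 \<bullet> g = 0" using W1g by (simp add: inner_commute)
  have pdW: "pd \<bullet> W1 = (1-eps)/eps^3 * (w * ((?D *v X) \<bullet> X) - ((?D *v X) \<bullet> W1) * ((?D *v g) \<bullet> X))
       + 1/eps^2 * (k12 * (X$i2 * W1$i1 - X$i1 * W1$i2))"
    unfolding pd_def pdot_red_def Let_def X_def[symmetric]
    by (simp add: inner_add_left inertia wedge_mv kappa_def scaleR_matrix_vector_assoc[symmetric]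
          inner_diff_left inner_axis' inner_axis W1g W1g' w_def algebra_simps)
  define u where "u = a powr (1 / (2 * eps))"
  have u0: "u > 0" using a0 by (simp add: u_def)
  have uu: "a powr (1/eps) = u^2"
  proof -
    have "a powr (1/eps) = a powr (1/(2*eps) + 1/(2*eps))" by simp
    also have "\<dots> = u^2" by (simp only: powr_add u_def power2_eq_square)
    finally show ?thesis .
  qed
  have pk: "a powr (1 / (2 * eps) - 1) = u / a"
    using a0 by (simp add: powr_diff u_def)
  have pk1: "a powr (1 / (2 * eps) - 1 - 1) = u / a^2"
  proof -
    have "a powr (1 / (2 * eps) - 1 - 1) = a powr (1 / (2 * eps) - 2)" by simp
    also have "\<dots> = u / a^2" using a0 by (simp add: powr_diff u_def)
    finally show ?thesis .
  qed
  have pe: "a powr (1 - 1/eps) = a / u^2"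
    using a0 by (simp add: powr_diff uu)
  have pe1: "a powr (1 - 1/eps - of_nat 1) = 1 / u^2"
    using a0 by (simp add: powr_minus_divide uu)
  have pe2: "a powr (- (1/eps)) = 1 / u^2" using a0 by (simp add: powr_minus_divide uu)
  have NN: "N = eps * u / a" by (simp add: N_def Nmult_def a_def[symmetric] pk)
  have Nd: "Nd = eps * ((1 / (2 * eps) - 1) * (u / a^2) * (2 * (-(eps^2 * \<beta>))))"
    unfolding Nd_def a_def[symmetric] pk1 NdX by (rule refl)
  define q where "q = N *\<^sub>R p0"
  define f where "f = (\<lambda>r::real. a3 + (a1 - a3) * (g$i1 + r * W1$i1)^2 + (a2 - a3) * (g$i2 + r * W1$i2)^2)"
  define Q0 where "Q0 = q \<bullet> (?M *v q)"
  define R where "R = W2 \<bullet> (?M *v q)"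
  define Q2 where "Q2 = W2 \<bullet> (?M *v W2)"
  have hfun: "(\<lambda>r. hstar eps a1 a2 a3 i1 i2 (g + r *\<^sub>R W1) (q + r *\<^sub>R W2))
      = (\<lambda>r. 1/2 * (f r powr (1 - 1/eps) * (Q0 + 2*r*R + r^2*Q2)))"
  proof
    fix r
    have Mexp: "?M *v (q + r *\<^sub>R W2) = ?M *v q + r *\<^sub>R (?M *v W2)"
      by (simp only: matrix_vector_right_distrib matrix_vector_mult_scaleR)
    have qW: "q \<bullet> (?M *v W2) = R" unfolding R_def by (metis dinv_sym inner_commute)
    have inn: "(q + r *\<^sub>R W2) \<bullet> (?M *v (q + r *\<^sub>R W2)) = Q0 + 2*r*R + r^2*Q2"
      unfolding Mexp inner_add_left inner_add_right inner_scaleR_left inner_scaleR_right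
        Q0_def[symmetric] Q2_def[symmetric] R_def[symmetric] qW
      by (simp add: power2_eq_square algebra_simps)
    have cA: "calA a1 a2 a3 i1 i2 (g + r *\<^sub>R W1) = f r" by (simp add: calA_def f_def)
    show "hstar eps a1 a2 a3 i1 i2 (g + r *\<^sub>R W1) (q + r *\<^sub>R W2) = 1/2 * (f r powr (1 - 1/eps) * (Q0 + 2*r*R + r^2*Q2))"
      unfolding hstar_def matrix_inv_diagA[OF apos] cA inn by (simp only: mult.assoc)
  qed
  have f0: "f 0 = a" by (simp add: f_def a_def calA_def)
  have df: "(f has_real_derivative 2 * w) (at 0)"
    unfolding f_def dW[symmetric] by (auto intro!: derivative_eq_intros simp: algebra_simps)
  have dpow: "((\<lambda>r. f r powr (1 - 1/eps)) has_real_derivative (1 - 1/eps) * f 0 powr (1 - 1/eps - of_nat 1) * (2 * w)) (at 0)"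
    by (rule DERIV_fun_powr[OF df]) (use f0 a0 in simp)
  have dpoly: "((\<lambda>r. Q0 + 2*r*R + r^2*Q2) has_real_derivative 2 * R) (at 0)"
    by (auto intro!: derivative_eq_intros)
  have dall: "((\<lambda>r. 1/2 * (f r powr (1 - 1/eps) * (Q0 + 2*r*R + r^2*Q2))) has_real_derivative
      1/2 * ((1 - 1/eps) * (1/u^2) * (2 * w) * Q0 + (a/u^2) * (2 * R))) (at 0)"
    by (rule DERIV_cong[OF DERIV_cmult[OF DERIV_mult[OF dpow dpoly], of "1/2"]]) (simp add: f0 pe pe2)
  have Q0v: "Q0 = N^2 * \<sigma>" by (simp add: Q0_def q_def \<sigma>_def power2_eq_square matrix_vector_mult_scaleR)
  have Rv: "R = N * \<rho>" by (simp add: R_def q_def \<rho>_def matrix_vector_mult_scaleR)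
  have tw: "twisted_form eps k12 a1 a2 a3 i1 i2 g (inverse N *\<^sub>R X, inverse N *\<^sub>R (N *\<^sub>R pd + Nd *\<^sub>R p0)) (W1, W2)
     = inverse N * (N * (pd \<bullet> W1) + Nd * (p0 \<bullet> W1)) - inverse N * (W2 \<bullet> X)
       + k12 / eps * (u / a) * ((inverse N * X$i1) * W1$i2 - W1$i1 * (inverse N * X$i2))"
    by (simp only: twisted_form_def fst_conv snd_conv a_def[symmetric] pk inner_add_left inner_scaleR_left
          inner_scaleR_right vector_scaleR_component real_scaleR_def)
  have fin: "1/2 * ((1 - 1/eps) * (1/u^2) * (2 * w) * Q0 + (a/u^2) * (2 * R))
     = - twisted_form eps k12 a1 a2 a3 i1 i2 g (inverse N *\<^sub>R X, inverse N *\<^sub>R (N *\<^sub>R pd + Nd *\<^sub>R p0)) (W1, W2)"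
    unfolding tw unfolding pdW DXX DXW DgX W2X Nd Q0v Rv \<pi>_def[symmetric] NN inverse_eq_divide
    using e a0 u0 by (simp add: field_simps power2_eq_square) (simp add: algebra_simps power3_eq_cube power2_eq_square)
  show ?thesis using dall unfolding hfun[unfolded q_def] fin .
qed

theorem theorem8p2:
  fixes a b eps k12 a1 a2 a3 :: real
    and i1 i2 :: "'n::finite"
    and I :: "real^'n^'n \<Rightarrow> real^'n^'n"
    and J :: "real set"
    and \<gamma> p G P :: "real \<Rightarrow> real^'n"
    and \<tau> :: "real \<Rightarrow> real"
  assumes n3: "CARD('n) \<ge> 3"
    and i12: "i1 \<noteq> i2"
    and ab: "a > 0" "b > 0"
    and eps: "eps = b / (b + a) \<or> (b \<noteq> a \<and> eps = b / (b - a))"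
    and apos: "a1 > 0" "a2 > 0" "a3 > 0"
    and inertia: "\<forall>x y. I (wedge x y)
                    = wedge (diagA a1 a2 a3 i1 i2 *v x) (diagA a1 a2 a3 i1 i2 *v y)"
    and J: "open J" "is_interval J"
    and onT: "\<forall>t\<in>J. (\<gamma> t, p t) \<in> TstarS"
    and eq_g: "\<forall>t\<in>J. (\<gamma> has_vector_derivative Xg eps I (\<gamma> t) (p t)) (at t)"
    and eq_p: "\<forall>t\<in>J. (p has_vector_derivative
                   pdot_red eps I (kappa k12 i1 i2) (\<gamma> t) (p t)) (at t)"
    and time: "\<forall>t\<in>J. (\<tau> has_real_derivative Nmult eps a1 a2 a3 i1 i2 (\<gamma> t)) (at t)"
    and newvars: "\<forall>t\<in>J. G (\<tau> t) = \<gamma> t \<and> P (\<tau> t) = Nmult eps a1 a2 a3 i1 i2 (\<gamma> t) *\<^sub>R p t"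
  shows "(\<forall>t\<in>J. G differentiable (at (\<tau> t)) \<and> P differentiable (at (\<tau> t)) \<and>
            (\<forall>W \<in> tangent_TstarS (G (\<tau> t)) (P (\<tau> t)).
               ((\<lambda>r. hstar eps a1 a2 a3 i1 i2 (G (\<tau> t) + r *\<^sub>R fst W) (P (\<tau> t) + r *\<^sub>R snd W))
                  has_real_derivative
                  - twisted_form eps k12 a1 a2 a3 i1 i2 (G (\<tau> t))
                      (vector_derivative G (at (\<tau> t)), vector_derivative P (at (\<tau> t))) W)
               (at 0)))
       \<and> (\<forall>g v q. g \<bullet> g = 1 \<longrightarrow> g \<bullet> v = 0 \<longrightarrow> q \<bullet> g = 0 \<longrightarrow>
            (\<forall>w. w \<bullet> g = 0 \<longrightarrow> q \<bullet> w = metric eps (diagA a1 a2 a3 i1 i2) g v w) \<longrightarrow>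
            hstar eps a1 a2 a3 i1 i2 g q = metric eps (diagA a1 a2 a3 i1 i2) g v v / 2)"
proof (intro conjI)
  show "\<forall>g v q. g \<bullet> g = 1 \<longrightarrow> g \<bullet> v = 0 \<longrightarrow> q \<bullet> g = 0 \<longrightarrow>
            (\<forall>w. w \<bullet> g = 0 \<longrightarrow> q \<bullet> w = metric eps (diagA a1 a2 a3 i1 i2) g v w) \<longrightarrow>
            hstar eps a1 a2 a3 i1 i2 g q = metric eps (diagA a1 a2 a3 i1 i2) g v v / 2"
    using second_part[OF i12 apos] by blast
next
  have e: "eps \<noteq> 0"
  proof -
    have "b + a > 0" using ab by simp
    moreover have "b \<noteq> a \<Longrightarrow> b - a \<noteq> 0" by simp
    ultimately show ?thesis using eps ab by auto
  qed
  define Nm where "Nm = (\<lambda>s. Nmult eps a1 a2 a3 i1 i2 (\<gamma> s))"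
  have cApos: "\<And>s. s \<in> J \<Longrightarrow> calA a1 a2 a3 i1 i2 (\<gamma> s) > 0"
    using onT calA_pos[OF i12 _ apos] by (auto simp: TstarS_def)
  have sgn: "(\<forall>s\<in>J. Nm s > 0) \<or> (\<forall>s\<in>J. Nm s < 0)"
  proof (cases "eps > 0")
    case True
    have "\<forall>s\<in>J. Nm s > 0"
    proof
      fix s assume "s \<in> J"
      then have "calA a1 a2 a3 i1 i2 (\<gamma> s) > 0" by (rule cApos)
      then show "Nm s > 0" using True by (simp add: Nm_def Nmult_def)
    qed
    then show ?thesis by blast
  next
    case False
    then have "eps < 0" using e by simp
    have "\<forall>s\<in>J. Nm s < 0"
    proof
      fix s assume "s \<in> J"
      then have "calA a1 a2 a3 i1 i2 (\<gamma> s) > 0" by (rule cApos)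
      then show "Nm s < 0" using \<open>eps < 0\<close> by (simp add: Nm_def Nmult_def mult_neg_pos)
    qed
    then show ?thesis by blast
  qed
  show "\<forall>t\<in>J. G differentiable (at (\<tau> t)) \<and> P differentiable (at (\<tau> t)) \<and>
            (\<forall>W \<in> tangent_TstarS (G (\<tau> t)) (P (\<tau> t)).
               ((\<lambda>r. hstar eps a1 a2 a3 i1 i2 (G (\<tau> t) + r *\<^sub>R fst W) (P (\<tau> t) + r *\<^sub>R snd W))
                  has_real_derivative
                  - twisted_form eps k12 a1 a2 a3 i1 i2 (G (\<tau> t))
                      (vector_derivative G (at (\<tau> t)), vector_derivative P (at (\<tau> t))) W)
               (at 0))"
  proof
    fix t assume t: "t \<in> J"
    define g where "g = \<gamma> t"
    define p0 where "p0 = p t"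
    define X where "X = Xg eps I g p0"
    define pd where "pd = pdot_red eps I (kappa k12 i1 i2) g p0"
    define N where "N = Nm t"
    define Nd where "Nd = eps * ((1 / (2 * eps) - 1) * calA a1 a2 a3 i1 i2 g powr (1 / (2 * eps) - 1 - 1)
                   * (2*(a1-a3)*g$i1*X$i1 + 2*(a2-a3)*g$i2*X$i2))"
    have gg: "g \<bullet> g = 1" and gp: "g \<bullet> p0 = 0" using onT t by (auto simp: TstarS_def g_def p0_def)
    have dg: "(\<gamma> has_vector_derivative X) (at t)" using eq_g t by (simp add: X_def g_def p0_def)
    have dp: "(p has_vector_derivative pd) (at t)" using eq_p t by (simp add: pd_def g_def p0_def)
    have N0: "N \<noteq> 0" using sgn t by (auto simp: N_def)
    obtain U \<sigma> where U: "open U" "\<tau> t \<in> U" "\<forall>y\<in>U. \<sigma> y \<in> J \<and> \<tau> (\<sigma> y) = y" "\<sigma> (\<tau> t) = t"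
      and d\<sigma>: "(\<sigma> has_real_derivative inverse (Nm t)) (at (\<tau> t))"
      using local_inverse[OF J t, of \<tau> Nm] time sgn by (auto simp: Nm_def)
    have d\<sigma>v: "(\<sigma> has_vector_derivative inverse N) (at (\<tau> t))"
      using d\<sigma> by (simp add: has_real_derivative_iff_has_vector_derivative N_def)
    have comp: "\<And>i. ((\<lambda>s. \<gamma> s $ i) has_real_derivative X $ i) (at t)"
      unfolding has_real_derivative_iff_has_vector_derivative
      by (rule bounded_linear.has_vector_derivative[OF bounded_linear_vec_nth dg])
    have dcA: "((\<lambda>s. calA a1 a2 a3 i1 i2 (\<gamma> s)) has_real_derivative
        2*(a1-a3)*g$i1*X$i1 + 2*(a2-a3)*g$i2*X$i2) (at t)"
      unfolding calA_def g_def by (auto intro!: derivative_eq_intros comp simp: algebra_simps)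
    have dN: "(Nm has_real_derivative Nd) (at t)"
    proof -
      have "((\<lambda>s. eps * calA a1 a2 a3 i1 i2 (\<gamma> s) powr (1 / (2 * eps) - 1)) has_real_derivative
         eps * ((1 / (2 * eps) - 1) * calA a1 a2 a3 i1 i2 (\<gamma> t) powr (1 / (2 * eps) - 1 - of_nat 1)
           * (2*(a1-a3)*g$i1*X$i1 + 2*(a2-a3)*g$i2*X$i2))) (at t)"
        by (rule DERIV_cmult[OF DERIV_fun_powr[OF dcA]]) (use cApos t in simp)
      then show ?thesis by (simp add: Nm_def Nmult_def Nd_def g_def)
    qed
    have dP0: "((\<lambda>s. Nm s *\<^sub>R p s) has_vector_derivative (N *\<^sub>R pd + Nd *\<^sub>R p0)) (at t)"
      using has_vector_derivative_scaleR[OF dN dp] by (simp add: N_def p0_def)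
    have Gd: "(G has_vector_derivative inverse N *\<^sub>R X) (at (\<tau> t))"
    proof (rule has_vector_derivative_transform_within_open[OF _ U(1) U(2)])
      show "((\<gamma> \<circ> \<sigma>) has_vector_derivative inverse N *\<^sub>R X) (at (\<tau> t))"
        by (rule vector_diff_chain_at[OF d\<sigma>v]) (use dg U(4) in simp)
      show "\<And>y. y \<in> U \<Longrightarrow> (\<gamma> \<circ> \<sigma>) y = G y" using U(3) newvars by (metis comp_apply)
    qed
    have Pd: "(P has_vector_derivative inverse N *\<^sub>R (N *\<^sub>R pd + Nd *\<^sub>R p0)) (at (\<tau> t))"
    proof (rule has_vector_derivative_transform_within_open[OF _ U(1) U(2)])
      show "((\<lambda>s. Nm s *\<^sub>R p s) \<circ> \<sigma> has_vector_derivative inverse N *\<^sub>R (N *\<^sub>R pd + Nd *\<^sub>R p0)) (at (\<tau> t))"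
        by (rule vector_diff_chain_at[OF d\<sigma>v]) (use dP0 U(4) in simp)
      show "((\<lambda>s. Nm s *\<^sub>R p s) \<circ> \<sigma>) y = P y" if y: "y \<in> U" for y
      proof -
        have "\<sigma> y \<in> J" "\<tau> (\<sigma> y) = y" using U(3) y by auto
        then show ?thesis using newvars by (metis Nm_def comp_apply)
      qed
    qed
    have Gt: "G (\<tau> t) = g" and Pt: "P (\<tau> t) = N *\<^sub>R p0"
      using newvars t by (auto simp: g_def N_def Nm_def p0_def)
    show "G differentiable (at (\<tau> t)) \<and> P differentiable (at (\<tau> t)) \<and>
            (\<forall>W \<in> tangent_TstarS (G (\<tau> t)) (P (\<tau> t)).
               ((\<lambda>r. hstar eps a1 a2 a3 i1 i2 (G (\<tau> t) + r *\<^sub>R fst W) (P (\<tau> t) + r *\<^sub>R snd W))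
                  has_real_derivative
                  - twisted_form eps k12 a1 a2 a3 i1 i2 (G (\<tau> t))
                      (vector_derivative G (at (\<tau> t)), vector_derivative P (at (\<tau> t))) W)
               (at 0))"
    proof (intro conjI ballI)
      show "G differentiable (at (\<tau> t))" using Gd by (rule differentiableI_vector)
      show "P differentiable (at (\<tau> t))" using Pd by (rule differentiableI_vector)
    next
      fix W assume W: "W \<in> tangent_TstarS (G (\<tau> t)) (P (\<tau> t))"
      obtain W1 W2 where W12: "W = (W1, W2)" by (cases W)
      have W1g: "g \<bullet> W1 = 0" and W2c: "W1 \<bullet> (N *\<^sub>R p0) + g \<bullet> W2 = 0"
        using W unfolding W12 tangent_TstarS_def Gt Pt by auto
      have vG: "vector_derivative G (at (\<tau> t)) = inverse N *\<^sub>R X" using Gd by (rule vector_derivative_at)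
      have vP: "vector_derivative P (at (\<tau> t)) = inverse N *\<^sub>R (N *\<^sub>R pd + Nd *\<^sub>R p0)"
        using Pd by (rule vector_derivative_at)
      show "((\<lambda>r. hstar eps a1 a2 a3 i1 i2 (G (\<tau> t) + r *\<^sub>R fst W) (P (\<tau> t) + r *\<^sub>R snd W))
                  has_real_derivative
                  - twisted_form eps k12 a1 a2 a3 i1 i2 (G (\<tau> t))
                      (vector_derivative G (at (\<tau> t)), vector_derivative P (at (\<tau> t))) W)
               (at 0)"
        unfolding vG vP Gt Pt W12 fst_conv snd_conv
        by (rule key[OF i12 apos e inertia gg gp W1g _ W2c X_def Nd_def pd_def])
          (simp add: N_def Nm_def g_def)
    qed
  qed
qed

end
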